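(* Consider the STAIR code with parameters $n,r,m,\mathbf{e}$ (and outside global parity symbols) as defined in the context. Let $F\subseteq\{0,\dots,n-1\}$ be a set of at most $m$ columns of the stripe (entirely failed chunks), and for each column $j\notin F$ let $L_j\subseteq\{0,\dots,r-1\}$ be a set of rows (lost sectors in column $j$). Suppose the number $t$ of columns $j\notin F$ with $L_j\neq\emptyset$ satisfies $t\le m'$, and that, writing the nonzero sizes $|L_j|$ in increasing order as $f_0\le f_1\le\cdots\le f_{t-1}$, we have $f_{t-1-i}\le e_{m'-1-i}$ for all $0\le i\le t-1$. Then the entire stripe (all data symbols $d_{i,j}$ and row parity symbols $p_{i,k}$) is uniquely determined by the symbols of the stripe in surviving positions (positions $(i,j)$ with $j\notin F$ and $i\notin L_j$) together with all $s$ global parity symbols $g_{h,l}$. Equivalently, if two data matrices give stripes that agree on all surviving positions and have identical global parity symbols, then the two data matrices are equal.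
   Context: Parameters: integers $n,r,m,m'$ with $1\le m<n$, $1\le m'\le n-m$, and a vector $\mathbf{e}=(e_0,\dots,e_{m'-1})$ of integers with $0<e_0\le e_1\le\cdots\le e_{m'-1}\le r$; $s=\sum_{l}e_l$. Work over a finite field $\mathbb{F}=GF(2^w)$ with $n+m'\le 2^w$ and $r+e_{m'-1}\le 2^w$. An $(\eta,\kappa)$-code is a linear maximum distance separable (MDS) code of length $\eta$ and dimension $\kappa$: any $\kappa$ coordinates of a codeword determine the codeword; it is systematic if its generator matrix has the form $(\mathbf{I}_\kappa\mid\cdot)$, so a codeword consists of the $\kappa$ input (data) symbols followed by $\eta-\kappa$ parity symbols. Let $\mathcal{C}_{row}$ be a systematic $(n+m',n-m)$-code and $\mathcal{C}_{col}$ a systematic $(r+e_{m'-1},r)$-code over $\mathbb{F}$ (e.g. Cauchy Reed–Solomon codes). STAIR encoding (outside global parities): data symbols $d_{i,j}$, $0\le i\le r-1$, $0\le j\le n-m-1$. Phase 1: for each row $i$, encoding $(d_{i,0},\dots,d_{i,n-m-1})$ with $\mathcal{C}_{row}$ gives $m$ row parity symbols $p_{i,0},\dots,p_{i,m-1}$ followed by $m'$ intermediate parity symbols $p'_{i,0},\dots,p'_{i,m'-1}$. Phase 2: for each $l$, encoding $(p'_{0,l},\dots,p'_{r-1,l})$ with $\mathcal{C}_{col}$ gives $e_{m'-1}$ parity symbols $c_{0,l},\dots,c_{e_{m'-1}-1,l}$; the global parity symbols are $g_{h,l}=c_{h,l}$ for $0\le h\le e_l-1$ (the remaining ones are discarded,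 as are the intermediate parities). The stripe is the $r\times n$ array whose row $i$ is $(d_{i,0},\dots,d_{i,n-m-1},p_{i,0},\dots,p_{i,m-1})$ (columns $0,\dots,n-m-1$ are data chunks, columns $n-m,\dots,n-1$ are row parity chunks); the $s$ global parity symbols are stored outside the stripe and are always available. *)

theory Defs
  imports Main
begin

text \<open>A systematic linear code of dimension kappa is given by its parity part P
  (a kappa x (eta-kappa) matrix, entries P i k): generator matrix (I | P).\<close>
definition sys_cw :: "nat \<Rightarrow> (nat \<Rightarrow> nat \<Rightarrow> 'a::field) \<Rightarrow> (nat \<Rightarrow> 'a) \<Rightarrow> nat \<Rightarrow> 'a" where
  "sys_cw \<kappa> P x j = (if j < \<kappa> then x j else (\<Sum>i<\<kappa>. x i * P i (j - \<kappa>)))"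

definition is_sys_MDS :: "nat \<Rightarrow> nat \<Rightarrow> (nat \<Rightarrow> nat \<Rightarrow> 'a::field) \<Rightarrow> bool" where
  "is_sys_MDS \<eta> \<kappa> P \<longleftrightarrow> \<kappa> \<le> \<eta> \<and>
     (\<forall>S \<subseteq> {..<\<eta>}. card S = \<kappa> \<longrightarrow>
        (\<forall>x y. (\<forall>j\<in>S. sys_cw \<kappa> P x j = sys_cw \<kappa> P y j) \<longrightarrow>
               (\<forall>j<\<eta>. sys_cw \<kappa> P x j = sys_cw \<kappa> P y j)))"

text \<open>Stripe entry (i,j), j < n: data symbol for j < n-m, row parity p_{i,j-(n-m)} otherwise.\<close>
definition stair_stripe :: "nat \<Rightarrow> nat \<Rightarrow> (nat \<Rightarrow> nat \<Rightarrow> 'a::field) \<Rightarrow> (nat \<Rightarrow> nat \<Rightarrow> 'a) \<Rightarrow> nat \<Rightarrow> nat \<Rightarrow> 'a" where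
  "stair_stripe n m Prow d i j = sys_cw (n - m) Prow (d i) j"

text \<open>Intermediate parity p'_{i,l} (coordinate n-m+m+l = n+l of the row codeword).\<close>
definition stair_interm :: "nat \<Rightarrow> nat \<Rightarrow> (nat \<Rightarrow> nat \<Rightarrow> 'a::field) \<Rightarrow> (nat \<Rightarrow> nat \<Rightarrow> 'a) \<Rightarrow> nat \<Rightarrow> nat \<Rightarrow> 'a" where
  "stair_interm n m Prow d i l = sys_cw (n - m) Prow (d i) (n + l)"

text \<open>Global parity g_{h,l} = c_{h,l}: parity h of the column code applied to
  (p'_{0,l},...,p'_{r-1,l}).\<close>
definition stair_global :: "nat \<Rightarrow> nat \<Rightarrow> nat \<Rightarrow> (nat \<Rightarrow> nat \<Rightarrow> 'a::field) \<Rightarrow> (nat \<Rightarrow> nat \<Rightarrow> 'a) \<Rightarrow> (nat \<Rightarrow> nat \<Rightarrow> 'a) \<Rightarrow> nat \<Rightarrow> nat \<Rightarrow> 'a" where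
  "stair_global n m r Prow Pcol d h l = sys_cw r Pcol (\<lambda>i. stair_interm n m Prow d i l) (r + h)"

end

theory Submission
  imports Defs
begin

lemma sys_cw_cong: "(\<And>i. i < k \<Longrightarrow> x i = y i) \<Longrightarrow> sys_cw k P x j = sys_cw k P y j"
  unfolding sys_cw_def by (auto intro!: sum.cong)

lemma MDS_ge:
  assumes "is_sys_MDS \<eta> \<kappa> P" "K \<subseteq> {..<\<eta>}" "card K \<ge> \<kappa>"
    "\<forall>j\<in>K. sys_cw \<kappa> P x j = sys_cw \<kappa> P y j" "j < \<eta>"
  shows "sys_cw \<kappa> P x j = sys_cw \<kappa> P y j"
proof -
  have "finite K" using assms(2) finite_subset by blast
  then obtain S where S: "S \<subseteq> K" "card S = \<kappa>" using assms(3) obtain_subset_with_card_n by metis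
  have "S \<subseteq> {..<\<eta>}" using S assms(2) by blast
  moreover have "\<forall>j\<in>S. sys_cw \<kappa> P x j = sys_cw \<kappa> P y j" using S assms(4) by blast
  ultimately show ?thesis using assms(1,5) S(2) unfolding is_sys_MDS_def by blast
qed

lemma product:
  "sys_cw r Pc (\<lambda>i. sys_cw \<kappa> Pr (d i) j) (r+h)
   = sys_cw \<kappa> Pr (\<lambda>k. sys_cw r Pc (\<lambda>i. sys_cw \<kappa> Pr (d i) k) (r+h)) j"
proof (cases "j < \<kappa>")
  case True then show ?thesis by (simp add: sys_cw_def)
next
  case False
  have "sys_cw r Pc (\<lambda>i. sys_cw \<kappa> Pr (d i) j) (r+h) = (\<Sum>i<r. (\<Sum>k<\<kappa>. d i k * Pr k (j - \<kappa>)) * Pc i h)"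
    using False by (simp add: sys_cw_def)
  also have "\<dots> = (\<Sum>k<\<kappa>. (\<Sum>i<r. d i k * Pc i h) * Pr k (j - \<kappa>))"
    by (simp add: sum_distrib_left sum_distrib_right mult_ac sum.swap[of _ "{..<r}"])
  also have "\<dots> = sys_cw \<kappa> Pr (\<lambda>k. sys_cw r Pc (\<lambda>i. sys_cw \<kappa> Pr (d i) k) (r+h)) j"
    using False by (simp add: sys_cw_def)
  finally show ?thesis .
qed

lemma count_sorted:
  fixes fs :: "nat list"
  assumes "sorted fs" "k < length fs" "fs ! k \<le> x"
  shows "length (filter (\<lambda>v. v \<le> x) fs) \<ge> k + 1"
proof -
  have "{..k} \<subseteq> {i. i < length fs \<and> fs ! i \<le> x}"
    using assms by (auto dest: sorted_nth_mono[of fs _ k])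
  hence "card {..k} \<le> card {i. i < length fs \<and> fs ! i \<le> x}" by (intro card_mono) auto
  thus ?thesis by (simp add: length_filter_conv_card)
qed

lemma count_set:
  assumes "finite J"
  shows "length (filter (\<lambda>v. v \<le> x) (sort (map f (sorted_list_of_set J)))) = card {j\<in>J. f j \<le> x}"
proof -
  have "length (filter (\<lambda>v. v \<le> x) (sort (map f (sorted_list_of_set J))))
      = length (filter (\<lambda>v. v \<le> x) (map f (sorted_list_of_set J)))"
    by (simp add: filter_sort)
  also have "\<dots> = length (filter (\<lambda>j. f j \<le> x) (sorted_list_of_set J))"
    by (simp add: filter_map comp_def)
  also have "\<dots> = card {j\<in>J. f j \<le> x}"
    using assms by (subst distinct_card[symmetric]) (auto intro: arg_cong[where f=card])
  finally show ?thesis .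
qed
theorem mainTheorem2:
  fixes n r m m' w :: nat and e :: "nat list"
    and Prow Pcol :: "nat \<Rightarrow> nat \<Rightarrow> 'a::{field,finite}"
    and d d' :: "nat \<Rightarrow> nat \<Rightarrow> 'a"
    and F :: "nat set" and L :: "nat \<Rightarrow> nat set"
  assumes field_card: "card (UNIV :: 'a set) = 2 ^ w"
    and m_bounds: "1 \<le> m" "m < n"
    and m'_bounds: "1 \<le> m'" "m' \<le> n - m"
    and e_len: "length e = m'"
    and e_pos: "\<forall>l<m'. 0 < e ! l"
    and e_sorted: "sorted e"
    and e_le_r: "e ! (m' - 1) \<le> r"
    and size1: "n + m' \<le> 2 ^ w"
    and size2: "r + e ! (m' - 1) \<le> 2 ^ w"
    and row_MDS: "is_sys_MDS (n + m') (n - m) Prow"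
    and col_MDS: "is_sys_MDS (r + e ! (m' - 1)) r Pcol"
    and F_sub: "F \<subseteq> {..<n}" and F_card: "card F \<le> m"
    and L_sub: "\<forall>j\<in>{..<n} - F. L j \<subseteq> {..<r}"
    and t_bound: "card {j \<in> {..<n} - F. L j \<noteq> {}} \<le> m'"
    and f_bound: "let J = {j \<in> {..<n} - F. L j \<noteq> {}};
                      t = card J;
                      fs = sort (map (\<lambda>j. card (L j)) (sorted_list_of_set J))
                  in \<forall>i<t. fs ! (t - 1 - i) \<le> e ! (m' - 1 - i)"
    and surv: "\<forall>i<r. \<forall>j<n. j \<notin> F \<and> i \<notin> L j \<longrightarrow>
                 stair_stripe n m Prow d i j = stair_stripe n m Prow d' i j"
    and glob: "\<forall>l<m'. \<forall>h<e ! l.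
                 stair_global n m r Prow Pcol d h l = stair_global n m r Prow Pcol d' h l"
  shows "(\<forall>i<r. \<forall>j<n. stair_stripe n m Prow d i j = stair_stripe n m Prow d' i j)
         \<and> (\<forall>i<r. \<forall>j<n - m. d i j = d' i j)"
proof -
  define R where "R x i j = sys_cw (n - m) Prow (x i) j" for x :: "nat \<Rightarrow> nat \<Rightarrow> 'a" and i j
  define V where "V x h j = sys_cw r Pcol (\<lambda>i. R x i j) (r + h)" for x h j
  define E where "E = e ! (m' - 1)"
  define J where "J = {j \<in> {..<n} - F. L j \<noteq> {}}"
  define t where "t = card J"
  define G where "G = {..<n} - F - J"
  define goodc where "goodc j \<longleftrightarrow> (\<forall>i<r. R d i j = R d' i j)" for j
  have finJ: "finite J" unfolding J_def by auto
  have tm': "t \<le> m'" using t_bound unfolding t_def J_def .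
  have e_mono: "\<And>a b. a \<le> b \<Longrightarrow> b < m' \<Longrightarrow> e ! a \<le> e ! b"
    using e_sorted e_len by (simp add: sorted_nth_mono)
  have eE: "\<And>l. l < m' \<Longrightarrow> e ! l \<le> E" unfolding E_def using e_mono by simp
  have F1: "V d h j = V d' h j" if "goodc j" for h j
    using that unfolding V_def goodc_def by (intro sys_cw_cong) auto
  have F2: "V d h j = V d' h j"
    if "card {j. j < n + m' \<and> V d h j = V d' h j} \<ge> n - m" "j < n + m'" for h j
  proof -
    have eq: "V x h j = sys_cw (n - m) Prow (\<lambda>k. V x h k) j" for x j
      unfolding V_def R_def by (rule product)
    show ?thesis
      apply (subst (1 2) eq)
      apply (rule MDS_ge[OF row_MDS, of "{j. j < n + m' \<and> V d h j = V d' h j}"])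
      using that by (auto simp: eq[symmetric])
  qed
  have F3: "goodc j"
    if "card {c. c < r + E \<and> sys_cw r Pcol (\<lambda>i. R d i j) c = sys_cw r Pcol (\<lambda>i. R d' i j) c} \<ge> r" for j
  proof -
    have "sys_cw r Pcol (\<lambda>i. R d i j) i = sys_cw r Pcol (\<lambda>i. R d' i j) i" if "i < r" for i
      apply (rule MDS_ge[OF col_MDS[folded E_def]])
      using that \<open>card _ \<ge> r\<close> by auto
    thus ?thesis unfolding goodc_def by (simp add: sys_cw_def)
  qed
  have F4: "R d i j = R d' i j"
    if "card {j. j < n + m' \<and> R d i j = R d' i j} \<ge> n - m" "j < n + m'" for i j
    unfolding R_def
    apply (rule MDS_ge[OF row_MDS, of "{j. j < n + m' \<and> R d i j = R d' i j}"])
    using that by (auto simp: R_def)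
  have GL: "V d h (n + l) = V d' h (n + l)" if "l < m'" "h < e ! l" for h l
    using glob that unfolding stair_global_def stair_interm_def V_def R_def by auto
  have Ggood: "goodc j" if "j \<in> G" for j
    using that surv unfolding G_def J_def goodc_def R_def stair_stripe_def by auto
  have JsubF: "J \<subseteq> {..<n} - F" unfolding J_def by auto
  have cardnF: "card ({..<n} - F) = n - card F"
    using F_sub by (simp add: card_Diff_subset finite_subset)
  have cardG: "card G = n - card F - t"
    unfolding G_def t_def using JsubF cardnF finJ by (simp add: card_Diff_subset)
  have tnF: "t \<le> n - card F" unfolding t_def using JsubF cardnF
    by (metis card_mono finite_Diff finite_lessThan)
  have CNT: "card {j\<in>J. card (L j) \<le> e ! (m' - t + k)} \<ge> k + 1" if "k < t" for k
  proof -
    define fs where "fs = sort (map (\<lambda>j. card (L j)) (sorted_list_of_set J))"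
    have lfs: "length fs = t" unfolding fs_def t_def using finJ by simp
    have fb: "\<forall>i<t. fs ! (t - 1 - i) \<le> e ! (m' - 1 - i)"
      using f_bound unfolding J_def[symmetric] t_def[symmetric] fs_def[symmetric] Let_def .
    have "t - 1 - k < t" using that by simp
    hence "fs ! (t - 1 - (t - 1 - k)) \<le> e ! (m' - 1 - (t - 1 - k))"
      using fb by blast
    moreover have "t - 1 - (t - 1 - k) = k" "m' - 1 - (t - 1 - k) = m' - t + k" using that tm' by auto
    ultimately have "fs ! k \<le> e ! (m' - t + k)" by simp
    hence "length (filter (\<lambda>v. v \<le> e ! (m' - t + k)) fs) \<ge> k + 1"
      using count_sorted[of fs k] lfs that unfolding fs_def by auto
    thus ?thesis using count_set[OF finJ, of "e ! (m' - t + k)" "\<lambda>j. card (L j)"] unfolding fs_def by simp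
  qed
  have IND: "card {j\<in>J. goodc j} \<ge> k" if "k \<le> t" for k
    using that
  proof (induction k)
    case 0 show ?case by simp
  next
    case (Suc k)
    hence kt: "k < t" and IH: "card {j\<in>J. goodc j} \<ge> k" by auto
    define ek where "ek = e ! (m' - t + k)"
    have ekE: "ek \<le> E" unfolding ek_def using eE kt tm' by simp
    have VR: "V d h j = V d' h j" if "h < ek" "j < n + m'" for h j
    proof (rule F2[OF _ that(2)])
      let ?A = "G \<union> {j\<in>J. goodc j} \<union> (\<lambda>l. n + l) ` {m' - t + k..<m'}"
      have sub: "?A \<subseteq> {j. j < n + m' \<and> V d h j = V d' h j}"
      proof
        fix j assume "j \<in> ?A"
        then consider "j \<in> G" | "j \<in> J \<and> goodc j" | "j \<in> (\<lambda>l. n + l) ` {m' - t + k..<m'}" by blast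
        then show "j \<in> {j. j < n + m' \<and> V d h j = V d' h j}"
        proof cases
          case 1 thus ?thesis using Ggood F1 unfolding G_def by auto
        next
          case 2 thus ?thesis using F1 JsubF by auto
        next
          case 3
          from 3 obtain l where l0: "l \<in> {m' - t + k..<m'}" "j = n + l" by (rule imageE) simp
          hence l: "j = n + l" "m' - t + k \<le> l" "l < m'" by auto
          have "h < e ! l" using that(1) e_mono[of "m' - t + k" l] l unfolding ek_def by simp
          thus ?thesis using GL l by auto
        qed
      qed
      have d1: "G \<inter> {j\<in>J. goodc j} = {}" unfolding G_def by auto
      have d2: "(G \<union> {j\<in>J. goodc j}) \<inter> (\<lambda>l. n + l) ` {m' - t + k..<m'} = {}"
        unfolding G_def J_def by auto
      have finG: "finite G" unfolding G_def by auto
      have "card ?A = card G + card {j\<in>J. goodc j} + (t - k)"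
        using d1 d2 finG finJ tm' kt
        by (simp add: card_Un_disjoint card_image inj_on_def)
      hence "card ?A \<ge> n - m" using cardG IH tnF F_card kt by linarith
      moreover have "finite {j. j < n + m' \<and> V d h j = V d' h j}" by simp
      ultimately show "card {j. j < n + m' \<and> V d h j = V d' h j} \<ge> n - m"
        using card_mono[OF _ sub] by linarith
    qed
    have "{j\<in>J. card (L j) \<le> ek} \<subseteq> {j\<in>J. goodc j}"
    proof safe
      fix j assume jJ: "j \<in> J" and cL: "card (L j) \<le> ek"
      have Lr: "L j \<subseteq> {..<r}" using L_sub JsubF jJ by auto
      let ?K = "{c. c < r + E \<and> sys_cw r Pcol (\<lambda>i. R d i j) c = sys_cw r Pcol (\<lambda>i. R d' i j) c}"
      let ?B = "({..<r} - L j) \<union> (\<lambda>h. r + h) ` {..<ek}"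
      have jn: "j < n" "j \<notin> F" using jJ JsubF by auto
      have sub: "?B \<subseteq> ?K"
      proof
        fix c assume "c \<in> ?B"
        then consider "c < r" "c \<notin> L j" | h where "c = r + h" "h < ek" by blast
        then show "c \<in> ?K"
        proof cases
          case 1
          thus ?thesis using surv jn unfolding R_def stair_stripe_def by (simp add: sys_cw_def)
        next
          case 2
          have "j < n + m'" using jn by simp
          thus ?thesis using VR[of h j] 2 ekE unfolding V_def by simp
        qed
      qed
      have cD: "card ({..<r} - L j) = r - card (L j)"
        using Lr by (metis card_Diff_subset card_lessThan finite_subset finite_lessThan)
      have "card ?B = (r - card (L j)) + ek"
        using cD by (subst card_Un_disjoint) (auto simp: card_Diff_subset Lr finite_subset card_image inj_on_def)
      hence "card ?B \<ge> r" using cL by linarith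
      moreover have "finite ?K" by simp
      ultimately show "goodc j" using F3 card_mono[OF _ sub] by (meson le_trans)
    qed
    hence "card {j\<in>J. card (L j) \<le> ek} \<le> card {j\<in>J. goodc j}"
      using finJ by (intro card_mono) auto
    thus ?case using CNT[OF kt] unfolding ek_def by linarith
  qed
  have "card {j\<in>J. goodc j} \<ge> t" using IND by simp
  hence Jgood: "\<And>j. j \<in> J \<Longrightarrow> goodc j"
    using finJ unfolding t_def
    by (metis (mono_tags, lifting) card_seteq mem_Collect_eq mem_Collect_eq subsetI)
  have allgood: "goodc j" if "j \<in> {..<n} - F" for j
    using that Jgood Ggood unfolding G_def by blast
  have rows: "R d i j = R d' i j" if "i < r" "j < n" for i j
  proof (rule F4)
    have "{..<n} - F \<subseteq> {j. j < n + m' \<and> R d i j = R d' i j}"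
      using allgood \<open>i < r\<close> unfolding goodc_def by auto
    hence "card ({..<n} - F) \<le> card {j. j < n + m' \<and> R d i j = R d' i j}"
      by (intro card_mono) auto
    thus "card {j. j < n + m' \<and> R d i j = R d' i j} \<ge> n - m" using cardnF F_card by linarith
  qed (use that in simp)
  show ?thesis
  proof
    show "\<forall>i<r. \<forall>j<n. stair_stripe n m Prow d i j = stair_stripe n m Prow d' i j"
      using rows unfolding R_def stair_stripe_def by blast
    show "\<forall>i<r. \<forall>j<n - m. d i j = d' i j"
    proof (intro allI impI)
      fix i j assume "i < r" "j < n - m"
      hence "R d i j = R d' i j" using rows by simp
      thus "d i j = d' i j" using \<open>j < n - m\<close> unfolding R_def sys_cw_def by simp
    qed
  qed
qed
end
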